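(* Let $X$ be a zero-dimensional Lindel\"of space. Then $X$ has the star-Hurewicz property if and only if $X$ has the Hurewicz property.
   Context: A space is zero-dimensional if it has a base of clopen sets. $St(A,\mathcal{P})=\bigcup\{P\in\mathcal{P}: P\cap A\ne\emptyset\}$. $X$ has the Hurewicz property if for each sequence $\langle\mathcal{U}_n\rangle$ of open covers there are finite $\mathcal{V}_n\subseteq\mathcal{U}_n$ such that each $x\in X$ belongs to $\bigcup\mathcal{V}_n$ for all but finitely many $n$. $X$ has the star-Hurewicz property if for each sequence $\langle\mathcal{U}_n\rangle$ of open covers there are finite $\mathcal{V}_n\subseteq\mathcal{U}_n$ such that each $x\in X$ belongs to $St(\bigcup\mathcal{V}_n,\mathcal{U}_n)$ for all but finitely many $n$. *)

theory Defs
  imports "HOL-Analysis.Analysis"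
begin

definition zero_dimensional :: "'a topology \<Rightarrow> bool" where
  "zero_dimensional X \<longleftrightarrow>
     (\<exists>\<B>. (\<forall>B\<in>\<B>. openin X B \<and> closedin X B) \<and>
          (\<forall>U. openin X U \<longrightarrow> (\<exists>\<W>. \<W> \<subseteq> \<B> \<and> \<Union>\<W> = U)))"

definition open_cover :: "'a topology \<Rightarrow> 'a set set \<Rightarrow> bool" where
  "open_cover X \<U> \<longleftrightarrow> (\<forall>U\<in>\<U>. openin X U) \<and> \<Union>\<U> = topspace X"

definition star :: "'a set \<Rightarrow> 'a set set \<Rightarrow> 'a set" where
  "star A \<P> = \<Union>{P\<in>\<P>. P \<inter> A \<noteq> {}}"

definition Hurewicz :: "'a topology \<Rightarrow> bool" where
  "Hurewicz X \<longleftrightarrow>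
     (\<forall>\<U>::nat \<Rightarrow> 'a set set. (\<forall>n. open_cover X (\<U> n)) \<longrightarrow>
        (\<exists>\<V>::nat \<Rightarrow> 'a set set. (\<forall>n. finite (\<V> n) \<and> \<V> n \<subseteq> \<U> n) \<and>
           (\<forall>x\<in>topspace X. \<forall>\<^sub>F n in sequentially. x \<in> \<Union>(\<V> n))))"

definition star_Hurewicz :: "'a topology \<Rightarrow> bool" where
  "star_Hurewicz X \<longleftrightarrow>
     (\<forall>\<U>::nat \<Rightarrow> 'a set set. (\<forall>n. open_cover X (\<U> n)) \<longrightarrow>
        (\<exists>\<V>::nat \<Rightarrow> 'a set set. (\<forall>n. finite (\<V> n) \<and> \<V> n \<subseteq> \<U> n) \<and>
           (\<forall>x\<in>topspace X. \<forall>\<^sub>F n in sequentially. x \<in> star (\<Union>(\<V> n)) (\<U> n))))"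

end

theory Submission
  imports Defs
begin

lemma disjoint_refinement:
  assumes zd: "zero_dimensional X" and lin: "Lindelof_space X" and oc: "open_cover X \<U>"
  shows "\<exists>\<W>. open_cover X \<W> \<and> (\<forall>A\<in>\<W>. \<exists>U\<in>\<U>. A \<subseteq> U) \<and>
              (\<forall>A\<in>\<W>. \<forall>B\<in>\<W>. A \<noteq> B \<longrightarrow> A \<inter> B = {})"
proof -
  obtain \<B> where Bc: "\<forall>B\<in>\<B>. openin X B \<and> closedin X B"
    and Bb: "\<forall>U. openin X U \<longrightarrow> (\<exists>\<W>. \<W> \<subseteq> \<B> \<and> \<Union>\<W> = U)"
    using zd unfolding zero_dimensional_def by blast
  define \<C> where "\<C> = {B\<in>\<B>. \<exists>U\<in>\<U>. B \<subseteq> U}"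
  have Cop: "\<And>C. C \<in> \<C> \<Longrightarrow> openin X C" using Bc \<C>_def by auto
  have "\<Union>\<C> = topspace X"
  proof
    show "\<Union>\<C> \<subseteq> topspace X" using Cop openin_subset by blast
    show "topspace X \<subseteq> \<Union>\<C>"
    proof
      fix x assume x: "x \<in> topspace X"
      then obtain U where U: "U \<in> \<U>" "x \<in> U" using oc unfolding open_cover_def by blast
      then have "openin X U" using oc unfolding open_cover_def by blast
      then obtain \<W> where "\<W> \<subseteq> \<B>" "\<Union>\<W> = U" using Bb by blast
      then obtain B where "B \<in> \<B>" "x \<in> B" "B \<subseteq> U" using U by blast
      then show "x \<in> \<Union>\<C>" using U \<C>_def by blast
    qed
  qed
  then obtain \<D> where D: "countable \<D>" "\<D> \<subseteq> \<C>" "\<Union>\<D> = topspace X"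
    using Lindelof_spaceD[OF lin Cop \<open>\<Union>\<C> = topspace X\<close>] by auto
  show ?thesis
  proof (cases "\<D> = {}")
    case True
    have "open_cover X {}" using D True unfolding open_cover_def by auto
    then show ?thesis by (intro exI[of _ "{}"]) simp
  next
    case False
    define c where "c = from_nat_into \<D>"
    have rc: "range c = \<D>" unfolding c_def by (rule range_from_nat_into[OF False D(1)])
    define d where "d k = c k - \<Union>(c ` {..<k})" for k
    have cC: "c k \<in> \<C>" for k using rc D(2) by auto
    have cl: "closedin X (c k)" for k using cC[of k] Bc unfolding \<C>_def by auto
    have dop: "openin X (d k)" for k
    proof -
      have "closedin X (\<Union>(c ` {..<k}))"
        using cl by (intro closedin_Union) auto
      then show ?thesis unfolding d_def by (rule openin_diff[OF Cop[OF cC]])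
    qed
    have "\<Union>(range d) = \<Union>(range c)"
    proof
      show "\<Union>(range d) \<subseteq> \<Union>(range c)" unfolding d_def by blast
      show "\<Union>(range c) \<subseteq> \<Union>(range d)"
      proof
        fix x assume "x \<in> \<Union>(range c)"
        then obtain k where k: "x \<in> c k" by blast
        define m where "m = (LEAST k. x \<in> c k)"
        have "x \<in> c m" unfolding m_def by (rule LeastI[of _ k]) (rule k)
        moreover have "\<And>j. j < m \<Longrightarrow> x \<notin> c j" using m_def not_less_Least by blast
        ultimately have "x \<in> d m" unfolding d_def by blast
        then show "x \<in> \<Union>(range d)" by blast
      qed
    qed
    then have cov: "\<Union>(range d) = topspace X" using rc D(3) by simp
    have disj: "d i \<inter> d j = {}" if "i < j" for i j
      using that unfolding d_def by blast
    show ?thesis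
    proof (rule exI[of _ "range d"], intro conjI ballI impI)
      show "open_cover X (range d)" using dop cov unfolding open_cover_def by blast
    next
      fix A assume "A \<in> range d"
      then obtain k where "A = d k" by blast
      moreover obtain U where "U \<in> \<U>" "c k \<subseteq> U" using cC \<C>_def by blast
      ultimately show "\<exists>U\<in>\<U>. A \<subseteq> U" unfolding d_def by blast
    next
      fix A B assume "A \<in> range d" "B \<in> range d" "A \<noteq> B"
      then obtain i j where "A = d i" "B = d j" "i \<noteq> j" by blast
      then show "A \<inter> B = {}" using disj by (metis inf_commute linorder_neq_iff)
    qed
  qed
qed

theorem mainTheorem15:
  fixes X :: "'a topology"
  assumes "zero_dimensional X" and "Lindelof_space X"
  shows "star_Hurewicz X \<longleftrightarrow> Hurewicz X"
proof
  assume H: "Hurewicz X"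
  show "star_Hurewicz X"
    unfolding star_Hurewicz_def
  proof (intro allI impI)
    fix \<U> :: "nat \<Rightarrow> 'a set set" assume "\<forall>n. open_cover X (\<U> n)"
    then obtain \<V> where V: "\<forall>n. finite (\<V> n) \<and> \<V> n \<subseteq> \<U> n"
      "\<forall>x\<in>topspace X. \<forall>\<^sub>F n in sequentially. x \<in> \<Union>(\<V> n)"
      using H unfolding Hurewicz_def by blast
    have "\<Union>(\<V> n) \<subseteq> star (\<Union>(\<V> n)) (\<U> n)" for n
      using V(1) unfolding star_def by blast
    then show "\<exists>\<V>. (\<forall>n. finite (\<V> n) \<and> \<V> n \<subseteq> \<U> n) \<and>
           (\<forall>x\<in>topspace X. \<forall>\<^sub>F n in sequentially. x \<in> star (\<Union>(\<V> n)) (\<U> n))"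
    proof (intro exI[of _ \<V>] conjI ballI)
      show "\<forall>n. finite (\<V> n) \<and> \<V> n \<subseteq> \<U> n" using V(1) by blast
      fix x assume "x \<in> topspace X"
      then have "\<forall>\<^sub>F n in sequentially. x \<in> \<Union>(\<V> n)" using V(2) by blast
      then show "\<forall>\<^sub>F n in sequentially. x \<in> star (\<Union>(\<V> n)) (\<U> n)"
        by (rule eventually_mono) (use \<open>\<And>n. \<Union>(\<V> n) \<subseteq> star (\<Union>(\<V> n)) (\<U> n)\<close> in blast)
    qed
  qed
next
  assume S: "star_Hurewicz X"
  show "Hurewicz X"
    unfolding Hurewicz_def
  proof (intro allI impI)
    fix \<U> :: "nat \<Rightarrow> 'a set set" assume oc: "\<forall>n. open_cover X (\<U> n)"
    have ex: "\<forall>n. \<exists>\<W>. open_cover X \<W> \<and> (\<forall>A\<in>\<W>. \<exists>U\<in>\<U> n. A \<subseteq> U) \<and>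
              (\<forall>A\<in>\<W>. \<forall>B\<in>\<W>. A \<noteq> B \<longrightarrow> A \<inter> B = {})"
    proof
      fix n show "\<exists>\<W>. open_cover X \<W> \<and> (\<forall>A\<in>\<W>. \<exists>U\<in>\<U> n. A \<subseteq> U) \<and>
              (\<forall>A\<in>\<W>. \<forall>B\<in>\<W>. A \<noteq> B \<longrightarrow> A \<inter> B = {})"
        using oc by (intro disjoint_refinement[OF assms]) simp
    qed
    obtain \<W> where W0: "\<forall>n. open_cover X (\<W> n) \<and> (\<forall>A\<in>\<W> n. \<exists>U\<in>\<U> n. A \<subseteq> U) \<and>
              (\<forall>A\<in>\<W> n. \<forall>B\<in>\<W> n. A \<noteq> B \<longrightarrow> A \<inter> B = {})"
      using choice[OF ex] by (elim exE) 
    have W: "\<And>n. open_cover X (\<W> n)"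
      "\<And>n. \<forall>A\<in>\<W> n. \<exists>U\<in>\<U> n. A \<subseteq> U"
      "\<And>n. \<forall>A\<in>\<W> n. \<forall>B\<in>\<W> n. A \<noteq> B \<longrightarrow> A \<inter> B = {}"
      using W0 by simp_all
    have SH: "(\<forall>n. open_cover X (\<W> n)) \<longrightarrow> (\<exists>\<V>::nat \<Rightarrow> 'a set set. (\<forall>n. finite (\<V> n) \<and> \<V> n \<subseteq> \<W> n) \<and>
           (\<forall>x\<in>topspace X. \<forall>\<^sub>F n in sequentially. x \<in> star (\<Union>(\<V> n)) (\<W> n)))"
      using S unfolding star_Hurewicz_def by (rule spec)
    obtain \<V> where V: "\<forall>n. finite (\<V> n) \<and> \<V> n \<subseteq> \<W> n"
      "\<forall>x\<in>topspace X. \<forall>\<^sub>F n in sequentially. x \<in> star (\<Union>(\<V> n)) (\<W> n)"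
      using mp[OF SH] W(1) by blast
    have st: "star (\<Union>(\<V> n)) (\<W> n) \<subseteq> \<Union>(\<V> n)" for n
    proof
      fix x assume "x \<in> star (\<Union>(\<V> n)) (\<W> n)"
      then obtain P where P: "P \<in> \<W> n" "x \<in> P" "P \<inter> \<Union>(\<V> n) \<noteq> {}"
        unfolding star_def by blast
      then obtain Q where "Q \<in> \<V> n" "P \<inter> Q \<noteq> {}" by blast
      then have "P = Q" using W(3)[of n] V(1) P(1) by blast
      then show "x \<in> \<Union>(\<V> n)" using P \<open>Q \<in> \<V> n\<close> by blast
    qed
    define f where "f n A = (SOME U. U \<in> \<U> n \<and> A \<subseteq> U)" for n A
    have f: "f n A \<in> \<U> n \<and> A \<subseteq> f n A" if "A \<in> \<V> n" for n A
    proof -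
      have "A \<in> \<W> n" using that V(1) by blast
      then have "\<exists>U. U \<in> \<U> n \<and> A \<subseteq> U" using W(2) by blast
      then show ?thesis unfolding f_def by (rule someI_ex)
    qed
    show "\<exists>\<V>. (\<forall>n. finite (\<V> n) \<and> \<V> n \<subseteq> \<U> n) \<and>
           (\<forall>x\<in>topspace X. \<forall>\<^sub>F n in sequentially. x \<in> \<Union>(\<V> n))"
    proof (rule exI[of _ "\<lambda>n. f n ` \<V> n"], intro conjI allI ballI)
      fix n show "finite (f n ` \<V> n)" using V(1) by blast
      show "f n ` \<V> n \<subseteq> \<U> n" using f by blast
    next
      fix x assume "x \<in> topspace X"
      then have "\<forall>\<^sub>F n in sequentially. x \<in> star (\<Union>(\<V> n)) (\<W> n)" using V(2) by blast
      then show "\<forall>\<^sub>F n in sequentially. x \<in> \<Union>(f n ` \<V> n)"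
      proof (rule eventually_mono)
        fix n assume "x \<in> star (\<Union>(\<V> n)) (\<W> n)"
        then obtain A where "A \<in> \<V> n" "x \<in> A" using st by blast
        then show "x \<in> \<Union>(f n ` \<V> n)" using f by blast
      qed
    qed
  qed
qed

end
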